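(* For every $v\geq 8$ there exists a connected symmetric configuration $v_3$ with strong chromatic number exactly 4.
   Context: A symmetric configuration $v_3$ consists of a set of $v$ points and a collection of $v$ blocks, each block being a 3-element subset of the points, such that every point lies in exactly 3 blocks and any two distinct points lie in at most one common block; it is connected if it is not the union of two configurations on disjoint nonempty point sets. A strong colouring is an assignment of colours to points such that the three points of every block receive three distinct colours; the strong chromatic number is the minimum number of colours in a strong colouring (equivalently, the chromatic number of the graph on the points in which two points are adjacent iff they share a block). *)

theory Defs
  imports Main
begin

definition sym_config :: "'a set \<Rightarrow> 'a set set \<Rightarrow> nat \<Rightarrow> bool" where
  "sym_config P B v \<longleftrightarrow>
     finite P \<and> card P = v \<and> finite B \<and> card B = v \<and>
     (\<forall>b\<in>B. b \<subseteq> P \<and> card b = 3) \<and>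
     (\<forall>p\<in>P. card {b\<in>B. p \<in> b} = 3) \<and>
     (\<forall>p\<in>P. \<forall>q\<in>P. p \<noteq> q \<longrightarrow> card {b\<in>B. p \<in> b \<and> q \<in> b} \<le> 1)"

definition config_connected :: "'a set \<Rightarrow> 'a set set \<Rightarrow> bool" where
  "config_connected P B \<longleftrightarrow>
     \<not> (\<exists>P1 P2. P1 \<noteq> {} \<and> P2 \<noteq> {} \<and> P1 \<inter> P2 = {} \<and> P1 \<union> P2 = P \<and>
               (\<forall>b\<in>B. b \<subseteq> P1 \<or> b \<subseteq> P2))"

definition strong_colouring :: "'a set \<Rightarrow> 'a set set \<Rightarrow> ('a \<Rightarrow> nat) \<Rightarrow> nat \<Rightarrow> bool" where
  "strong_colouring P B c k \<longleftrightarrow>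
     (\<forall>p\<in>P. c p < k) \<and> (\<forall>b\<in>B. inj_on c b)"

definition strong_chromatic_number :: "'a set \<Rightarrow> 'a set set \<Rightarrow> nat" where
  "strong_chromatic_number P B = (LEAST k. \<exists>c. strong_colouring P B c k)"

end

theory Submission
  imports Defs
begin


lemma conn_aux:
  fixes blk :: "nat \<Rightarrow> nat set"
  assumes conn: "\<And>p. p < v \<Longrightarrow> 0 < p \<Longrightarrow> \<exists>i q. i < v \<and> q < p \<and> p \<in> blk i \<and> q \<in> blk i"
  and blocks: "\<And>i. i < v \<Longrightarrow> blk i \<subseteq> X \<or> blk i \<inter> X = {}"
  and z: "0 \<in> X"
  shows "p < v \<Longrightarrow> p \<in> X"
proof (induction p rule: less_induct)
  case (less p)
  show ?case
  proof (cases "p = 0")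
    case True thus ?thesis using z by simp
  next
    case False
    then obtain i q where w: "i < v" "q < p" "p \<in> blk i" "q \<in> blk i"
      using conn[OF less.prems] by auto
    have "q \<in> X" using less.IH[OF w(2)] w(2) less.prems by simp
    hence "blk i \<subseteq> X" using blocks[OF w(1)] w(4) by auto
    thus ?thesis using w(3) by auto
  qed
qed

lemma frame:
  fixes blk :: "nat \<Rightarrow> nat set" and v :: nat and col :: "nat \<Rightarrow> nat" and K :: "nat set"
  assumes vpos: "v > 0"
  and sub: "\<And>i. i < v \<Longrightarrow> blk i \<subseteq> {..<v} \<and> card (blk i) = 3"
  and lin: "\<And>i j x y. i < v \<Longrightarrow> j < v \<Longrightarrow> i \<noteq> j \<Longrightarrow> x \<in> blk i \<Longrightarrow> y \<in> blk i
              \<Longrightarrow> x \<in> blk j \<Longrightarrow> y \<in> blk j \<Longrightarrow> x = y"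
  and deg: "\<And>p. p < v \<Longrightarrow> \<exists>i j k. i < v \<and> j < v \<and> k < v \<and> i \<noteq> j \<and> i \<noteq> k \<and> j \<noteq> k
                \<and> p \<in> blk i \<and> p \<in> blk j \<and> p \<in> blk k"
  and conn: "\<And>p. p < v \<Longrightarrow> 0 < p \<Longrightarrow> \<exists>i q. i < v \<and> q < p \<and> p \<in> blk i \<and> q \<in> blk i"
  and colr: "\<And>p. p < v \<Longrightarrow> col p < 4"
  and coli: "\<And>i. i < v \<Longrightarrow> inj_on col (blk i)"
  and Ksub: "K \<subseteq> {..<v}" and Kc: "card K = 4"
  and Kadj: "\<And>x y. x \<in> K \<Longrightarrow> y \<in> K \<Longrightarrow> x \<noteq> y \<Longrightarrow> \<exists>i<v. x \<in> blk i \<and> y \<in> blk i"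
  shows "sym_config {..<v} (blk ` {..<v}) v \<and> config_connected {..<v} (blk ` {..<v})
         \<and> strong_chromatic_number {..<v} (blk ` {..<v}) = 4"
proof -
  let ?P = "{..<v}" and ?B = "blk ` {..<v}"
  have fin_blk: "\<And>i. i < v \<Longrightarrow> finite (blk i)"
  proof (rule ccontr)
    fix i assume "i < v" "infinite (blk i)"
    thus False using sub[of i] card.infinite[of "blk i"] by simp
  qed
  have inj: "inj_on blk {..<v}"
  proof (rule inj_onI)
    fix i j assume i: "i \<in> {..<v}" and j: "j \<in> {..<v}" and e: "blk i = blk j"
    show "i = j"
    proof (rule ccontr)
      assume ne: "i \<noteq> j"
      have "\<forall>x\<in>blk i. \<forall>y\<in>blk i. x = y"
      proof (intro ballI)
        fix x y assume "x \<in> blk i" "y \<in> blk i"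
        thus "x = y" using lin[of i j x y] i j ne e by simp
      qed
      moreover have "finite (blk i)" using fin_blk i by simp
      ultimately have "card (blk i) \<le> Suc 0" using card_le_Suc0_iff_eq[of "blk i"] by blast
      thus False using sub[of i] i by simp
    qed
  qed
  have cardB: "card ?B = v" using card_image[OF inj] by simp
  have degeq: "\<And>p. {b\<in>?B. p \<in> b} = blk ` {i\<in>{..<v}. p \<in> blk i}" by auto
  have degcard: "\<And>p. card {b\<in>?B. p \<in> b} = card {i\<in>{..<v}. p \<in> blk i}"
    unfolding degeq by (rule card_image[OF inj_on_subset[OF inj]]) auto
  have ge3: "\<And>p. p < v \<Longrightarrow> 3 \<le> card {i\<in>{..<v}. p \<in> blk i}"
  proof -
    fix p assume p: "p < v"
    obtain i j k where w: "i < v \<and> j < v \<and> k < v \<and> i \<noteq> j \<and> i \<noteq> k \<and> j \<noteq> k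
                \<and> p \<in> blk i \<and> p \<in> blk j \<and> p \<in> blk k" using deg[OF p] by blast
    have "{i,j,k} \<subseteq> {i\<in>{..<v}. p \<in> blk i}" using w by auto
    moreover have "card {i,j,k} = 3" using w by auto
    ultimately show "3 \<le> card {i\<in>{..<v}. p \<in> blk i}"
      using card_mono[of "{i\<in>{..<v}. p \<in> blk i}" "{i,j,k}"] by simp
  qed
  have sumeq: "(\<Sum>p\<in>?P. card {i\<in>{..<v}. p \<in> blk i}) = (\<Sum>i\<in>{..<v}. card (blk i))"
  proof -
    have "(\<Sum>p\<in>?P. card {i\<in>{..<v}. p \<in> blk i}) = (\<Sum>p\<in>?P. \<Sum>i\<in>{..<v}. if p \<in> blk i then 1 else 0)"
      by (simp add: sum.inter_filter[symmetric])
    also have "\<dots> = (\<Sum>i\<in>{..<v}. \<Sum>p\<in>?P. if p \<in> blk i then 1 else 0)" by (rule sum.swap)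
    also have "\<dots> = (\<Sum>i\<in>{..<v}. card {p\<in>?P. p \<in> blk i})"
      by (simp add: sum.inter_filter[symmetric])
    also have "\<dots> = (\<Sum>i\<in>{..<v}. card (blk i))"
    proof (rule sum.cong)
      fix i assume "i \<in> {..<v}"
      hence "{p\<in>?P. p \<in> blk i} = blk i" using sub[of i] by auto
      thus "card {p\<in>?P. p \<in> blk i} = card (blk i)" by simp
    qed simp
    finally show ?thesis .
  qed
  have sum3: "(\<Sum>i\<in>{..<v}. card (blk i)) = (\<Sum>i\<in>{..<v}. (3::nat))"
    using sub by (intro sum.cong) auto
  have eq3: "\<And>p. p < v \<Longrightarrow> card {i\<in>{..<v}. p \<in> blk i} = 3"
  proof (rule ccontr)
    fix p assume p: "p < v" and ne: "card {i\<in>{..<v}. p \<in> blk i} \<noteq> 3"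
    have "(\<Sum>p\<in>?P. (3::nat)) < (\<Sum>p\<in>?P. card {i\<in>{..<v}. p \<in> blk i})"
      apply (rule sum_strict_mono_ex1)
      using ge3 ne p by (auto intro!: bexI[of _ p] simp: order.order_iff_strict)
    thus False using sumeq sum3 by simp
  qed
  have pair: "\<And>p q. p \<noteq> q \<Longrightarrow> card {b\<in>?B. p \<in> b \<and> q \<in> b} \<le> 1"
  proof -
    fix p q :: nat assume pq: "p \<noteq> q"
    have "\<forall>x\<in>{b\<in>?B. p \<in> b \<and> q \<in> b}. \<forall>y\<in>{b\<in>?B. p \<in> b \<and> q \<in> b}. x = y"
    proof (intro ballI)
      fix x y assume x: "x \<in> {b\<in>?B. p \<in> b \<and> q \<in> b}" and y: "y \<in> {b\<in>?B. p \<in> b \<and> q \<in> b}"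
      then obtain i j where "i < v" "j < v" "x = blk i" "y = blk j" by auto
      thus "x = y" using lin[of i j p q] x y pq by auto
    qed
    moreover have "finite {b\<in>?B. p \<in> b \<and> q \<in> b}" by simp
    ultimately have "card {b\<in>?B. p \<in> b \<and> q \<in> b} \<le> Suc 0"
      using card_le_Suc0_iff_eq by blast
    thus "card {b\<in>?B. p \<in> b \<and> q \<in> b} \<le> 1" by simp
  qed
  have sc: "sym_config ?P ?B v"
    unfolding sym_config_def
  proof (intro conjI ballI impI)
    show "card ?B = v" by (rule cardB)
  next
    show "finite ?P" by simp
  next
    show "card ?P = v" by simp
  next
    show "finite ?B" by simp
  next
    fix b assume "b \<in> ?B"
    then obtain i where "i < v" "b = blk i" by auto
    thus "b \<subseteq> ?P" "card b = 3" using sub[of i] by auto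
  next
    fix p assume "p \<in> ?P"
    hence pv: "p < v" by simp
    show "card {b\<in>?B. p \<in> b} = 3" by (subst degcard) (rule eq3[OF pv])
  next
    fix p q :: nat assume "p \<noteq> q"
    thus "card {b\<in>?B. p \<in> b \<and> q \<in> b} \<le> 1" by (rule pair)
  qed
  have cc: "config_connected ?P ?B"
    unfolding config_connected_def
  proof
    assume "\<exists>P1 P2. P1 \<noteq> {} \<and> P2 \<noteq> {} \<and> P1 \<inter> P2 = {} \<and> P1 \<union> P2 = ?P \<and> (\<forall>b\<in>?B. b \<subseteq> P1 \<or> b \<subseteq> P2)"
    then obtain P1 P2 where h1: "P1 \<noteq> {}" and h2: "P2 \<noteq> {}" and h3: "P1 \<inter> P2 = {}"
      and h4: "P1 \<union> P2 = ?P" and h5: "\<forall>b\<in>?B. b \<subseteq> P1 \<or> b \<subseteq> P2" by auto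
    have b1: "\<And>i. i < v \<Longrightarrow> blk i \<subseteq> P1 \<or> blk i \<inter> P1 = {}"
    proof -
      fix i assume "i < v"
      hence "blk i \<subseteq> P1 \<or> blk i \<subseteq> P2" using h5 by auto
      thus "blk i \<subseteq> P1 \<or> blk i \<inter> P1 = {}" using h3 by auto
    qed
    have b2: "\<And>i. i < v \<Longrightarrow> blk i \<subseteq> P2 \<or> blk i \<inter> P2 = {}"
    proof -
      fix i assume "i < v"
      hence "blk i \<subseteq> P1 \<or> blk i \<subseteq> P2" using h5 by auto
      thus "blk i \<subseteq> P2 \<or> blk i \<inter> P2 = {}" using h3 by auto
    qed
    have "0 \<in> ?P" using vpos by simp
    hence "0 \<in> P1 \<or> 0 \<in> P2" using h4 by auto
    thus False
    proof
      assume "0 \<in> P1"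
      hence "\<And>p. p < v \<Longrightarrow> p \<in> P1" using conn_aux[OF conn b1] by blast
      hence "P2 \<subseteq> P1" using h4 by auto
      thus False using h2 h3 by auto
    next
      assume "0 \<in> P2"
      hence "\<And>p. p < v \<Longrightarrow> p \<in> P2" using conn_aux[OF conn b2] by blast
      hence "P1 \<subseteq> P2" using h4 by auto
      thus False using h1 h3 by auto
    qed
  qed
  have colex: "\<exists>c. strong_colouring ?P ?B c 4"
    using colr coli unfolding strong_colouring_def by auto
  have lower: "\<And>k c. strong_colouring ?P ?B c k \<Longrightarrow> 4 \<le> k"
  proof -
    fix k c assume s: "strong_colouring ?P ?B c k"
    have "inj_on c K"
    proof (rule inj_onI)
      fix x y assume x: "x \<in> K" and y: "y \<in> K" and e: "c x = c y"
      show "x = y"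
      proof (rule ccontr)
        assume "x \<noteq> y"
        then obtain i where "i < v" "x \<in> blk i" "y \<in> blk i" using Kadj x y by blast
        hence "inj_on c (blk i)" using s unfolding strong_colouring_def by auto
        thus False using e \<open>x \<in> blk i\<close> \<open>y \<in> blk i\<close> \<open>x \<noteq> y\<close> by (meson inj_onD)
      qed
    qed
    hence "card (c ` K) = 4" using Kc card_image[of c K] by simp
    moreover have "c ` K \<subseteq> {..<k}" using s Ksub unfolding strong_colouring_def by auto
    ultimately show "4 \<le> k" using card_mono[of "{..<k}" "c ` K"] by simp
  qed
  have "strong_chromatic_number ?P ?B = 4"
    unfolding strong_chromatic_number_def
    by (rule Least_equality) (use colex lower in auto)
  thus ?thesis using sc cc by blast
qed


lemma ex3I: "i < v \<Longrightarrow> j < v \<Longrightarrow> k < v \<Longrightarrow> i \<noteq> j \<Longrightarrow> i \<noteq> k \<Longrightarrow> j \<noteq> k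
   \<Longrightarrow> p \<in> B i \<Longrightarrow> p \<in> B j \<Longrightarrow> p \<in> B k \<Longrightarrow>
   \<exists>i j k. i < v \<and> j < v \<and> k < v \<and> i \<noteq> j \<and> i \<noteq> k \<and> j \<noteq> k
                \<and> p \<in> B i \<and> p \<in> B j \<and> p \<in> B k"
  by blast

lemma ex2I: "i < v \<Longrightarrow> q < p \<Longrightarrow> p \<in> B i \<Longrightarrow> q \<in> B i \<Longrightarrow>
   \<exists>i q. i < v \<and> q < p \<and> p \<in> B i \<and> q \<in> B i"
  by blast

lemma adjI: "i < v \<Longrightarrow> x \<in> B i \<Longrightarrow> y \<in> B i \<Longrightarrow> \<exists>i<v. x \<in> B i \<and> y \<in> B i"
  by blast

definition blkA :: "nat \<Rightarrow> nat \<Rightarrow> nat set" where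
 "blkA m i = (if i < m+3 then {i,i+1,i+3} else if i = m+3 then {m+3,m+6,m+7}
   else if i = m+4 then {m+4,m+5,m+6} else if i = m+5 then {m+4,m+7,0}
   else if i = m+6 then {m+5,m+7,1} else {m+6,0,2})"

lemma blkA_sub: "i < m+8 \<Longrightarrow> blkA m i \<subseteq> {..<m+8} \<and> card (blkA m i) = 3"
  by (auto simp: blkA_def)

definition fA :: "nat \<Rightarrow> nat \<Rightarrow> nat \<Rightarrow> nat" where
 "fA m x y = (   if x = m+3 \<and> y = m+6 then m+3 else
   if x = m+3 \<and> y = m+7 then m+3 else
   if x = m+6 \<and> y = m+7 then m+3 else
   if x = m+4 \<and> y = m+5 then m+4 else
   if x = m+4 \<and> y = m+6 then m+4 else
   if x = m+5 \<and> y = m+6 then m+4 else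
   if x = m+4 \<and> y = m+7 then m+5 else
   if x = 0 \<and> y = m+4 then m+5 else
   if x = 0 \<and> y = m+7 then m+5 else
   if x = m+5 \<and> y = m+7 then m+6 else
   if x = 1 \<and> y = m+5 then m+6 else
   if x = 1 \<and> y = m+7 then m+6 else
   if x = 0 \<and> y = m+6 then m+7 else
   if x = 2 \<and> y = m+6 then m+7 else
   if x = 0 \<and> y = 2 then m+7 else
   if y = x + 2 then x - 1 else x)"

lemma fA_s: "\<lbrakk>y = i \<or> y = Suc i \<or> y = i + 3; x < y; i < m + 3;
      x = i \<or> x = Suc i \<or> x = i + 3\<rbrakk> \<Longrightarrow> fA m x y = i"
  by (elim disjE; simp add: fA_def; linarith?)

lemma fA_g0: "\<lbrakk>x = m+3 \<or> x = m+6 \<or> x = m+7; y = m+3 \<or> y = m+6 \<or> y = m+7; x < y\<rbrakk> \<Longrightarrow> fA m x y = m+3"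
  by (elim disjE; simp add: fA_def; linarith?)

lemma fA_g1: "\<lbrakk>x = m+4 \<or> x = m+5 \<or> x = m+6; y = m+4 \<or> y = m+5 \<or> y = m+6; x < y\<rbrakk> \<Longrightarrow> fA m x y = m+4"
  by (elim disjE; simp add: fA_def; linarith?)

lemma fA_g2: "\<lbrakk>x = m+4 \<or> x = m+7 \<or> x = 0; y = m+4 \<or> y = m+7 \<or> y = 0; x < y\<rbrakk> \<Longrightarrow> fA m x y = m+5"
  by (elim disjE; simp add: fA_def; linarith?)

lemma fA_g3: "\<lbrakk>x = m+5 \<or> x = m+7 \<or> x = 1; y = m+5 \<or> y = m+7 \<or> y = 1; x < y\<rbrakk> \<Longrightarrow> fA m x y = m+6"
  by (elim disjE; simp add: fA_def; linarith?)

lemma fA_g4: "\<lbrakk>x = m+6 \<or> x = 0 \<or> x = 2; y = m+6 \<or> y = 0 \<or> y = 2; x < y\<rbrakk> \<Longrightarrow> fA m x y = m+7"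
  by (elim disjE; simp add: fA_def; linarith?)

lemma fA_blk: "i < m+8 \<Longrightarrow> x \<in> blkA m i \<Longrightarrow> y \<in> blkA m i \<Longrightarrow> x < y \<Longrightarrow> fA m x y = i"
proof -
  assume a:  "i < m+8" "x \<in> blkA m i" "y \<in> blkA m i" "x < y"
  consider "i < m+3" | "i = m+3" | "i = m+4" | "i = m+5" | "i = m+6" | "i = m+7" using a by arith
  then show ?thesis
  proof cases
    case 1 show ?thesis by (rule fA_s) (use a 1 in \<open>simp_all add: blkA_def\<close>)

  next
    case 2 show ?thesis unfolding 2 by (rule fA_g0) (use a 2 in \<open>simp_all add: blkA_def\<close>)

  next
    case 3 show ?thesis unfolding 3 by (rule fA_g1) (use a 3 in \<open>simp_all add: blkA_def\<close>)

  next
    case 4 show ?thesis unfolding 4 by (rule fA_g2) (use a 4 in \<open>simp_all add: blkA_def\<close>)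

  next
    case 5 show ?thesis unfolding 5 by (rule fA_g3) (use a 5 in \<open>simp_all add: blkA_def\<close>)

  next
    case 6 show ?thesis unfolding 6 by (rule fA_g4) (use a 6 in \<open>simp_all add: blkA_def\<close>)

  qed
qed

lemma blkA_lin: "i < m+8 \<Longrightarrow> j < m+8 \<Longrightarrow> i \<noteq> j \<Longrightarrow> x \<in> blkA m i \<Longrightarrow> y \<in> blkA m i
              \<Longrightarrow> x \<in> blkA m j \<Longrightarrow> y \<in> blkA m j \<Longrightarrow> x = y"
proof (rule ccontr)
  assume a: "i < m+8" "j < m+8" "i \<noteq> j" "x \<in> blkA m i" "y \<in> blkA m i"
              "x \<in> blkA m j" "y \<in> blkA m j" "x \<noteq> y"
  show False
  proof (cases "x < y")
    case True
    thus False using fA_blk[where i=i and m=m and x=x and y=y] fA_blk[where i=j and m=m and x=x and y=y] a  by simp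
  next
    case False
    hence "y < x" using a(8) by simp
    thus False using fA_blk[where i=i and m=m and x=y and y=x] fA_blk[where i=j and m=m and x=y and y=x] a  by simp
  qed
qed

lemma blkA_deg: "p < m+8 \<Longrightarrow> \<exists>i j k. i < m+8 \<and> j < m+8 \<and> k < m+8 \<and> i \<noteq> j \<and> i \<noteq> k \<and> j \<noteq> k
                \<and> p \<in> blkA m i \<and> p \<in> blkA m j \<and> p \<in> blkA m k"
proof -
  assume p: "p < m+8"
  consider "p = 0" | "p = 1" | "p = 2" | "3 \<le> p" "p < m+3" | "p = m+3" | "p = m+4" | "p = m+5" | "p = m+6" | "p = m+7" using p by arith
  then show ?thesis
  proof cases

    case 1 show ?thesis by (rule ex3I[of "0" _ "m+5" "m+7"]) (use 1 in \<open>auto simp add: blkA_def\<close>)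
  next
    case 2 show ?thesis by (rule ex3I[of "0" _ "1" "m+6"]) (use 2 in \<open>auto simp add: blkA_def\<close>)
  next
    case 3 show ?thesis by (rule ex3I[of "1" _ "2" "m+7"]) (use 3 in \<open>auto simp add: blkA_def\<close>)
  next
    case 4 show ?thesis by (rule ex3I[of "p" _ "p-1" "p-3"]) (use 4 in \<open>auto simp add: blkA_def\<close>)
  next
    case 5 show ?thesis by (rule ex3I[of "m" _ "m+2" "m+3"]) (use 5 in \<open>auto simp add: blkA_def\<close>)
  next
    case 6 show ?thesis by (rule ex3I[of "m+1" _ "m+4" "m+5"]) (use 6 in \<open>auto simp add: blkA_def\<close>)
  next
    case 7 show ?thesis by (rule ex3I[of "m+2" _ "m+4" "m+6"]) (use 7 in \<open>auto simp add: blkA_def\<close>)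
  next
    case 8 show ?thesis by (rule ex3I[of "m+3" _ "m+4" "m+7"]) (use 8 in \<open>auto simp add: blkA_def\<close>)
  next
    case 9 show ?thesis by (rule ex3I[of "m+3" _ "m+5" "m+6"]) (use 9 in \<open>auto simp add: blkA_def\<close>)
  qed
qed


lemma blkA_conn: "p < m+8 \<Longrightarrow> 0 < p \<Longrightarrow> \<exists>i q. i < m+8 \<and> q < p \<and> p \<in> blkA m i \<and> q \<in> blkA m i"
proof -
  assume p: "p < m+8" "0 < p"
  consider "p \<le> m+3" | "p = m+4 \<or> p = m+5" | "p = m+6" | "p = m+7" using p by arith
  then show ?thesis
  proof cases
    case 1 show ?thesis by (rule ex2I[of "p-1" _ "p-1"]) (use 1 p in \<open>auto simp add: blkA_def\<close>)
  next
    case 2 show ?thesis by (rule ex2I[of "p-3" _ "p-3"]) (use 2 p in \<open>auto simp add: blkA_def\<close>)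
  next
    case 3 show ?thesis by (rule ex2I[of "m+3" _ "m+3"]) (use 3 p in \<open>auto simp add: blkA_def\<close>)
  next
    case 4 show ?thesis by (rule ex2I[of "m+3" _ "m+3"]) (use 4 p in \<open>auto simp add: blkA_def\<close>)
  qed
qed

lemma blkA_K: "x \<in> {0,1,2,3} \<Longrightarrow> y \<in> {0,1,2,3} \<Longrightarrow> x \<noteq> y \<Longrightarrow> \<exists>i<m+8. x \<in> blkA m i \<and> y \<in> blkA m i"
proof -
  assume a: "x \<in> {0,1,2,3}" "y \<in> {0,1,2,3}" "x \<noteq> y"
  consider "x = 0" "y = 1" | "x = 1" "y = 0" | "x = 0" "y = 2" | "x = 2" "y = 0" | "x = 0" "y = 3" | "x = 3" "y = 0" | "x = 1" "y = 2" | "x = 2" "y = 1" | "x = 1" "y = 3" | "x = 3" "y = 1" | "x = 2" "y = 3" | "x = 3" "y = 2" using a by auto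
  then show ?thesis
  proof cases
    case 1 show ?thesis by (rule adjI[of "0"]) (simp_all add: 1 blkA_def )
  next
    case 2 show ?thesis by (rule adjI[of "0"]) (simp_all add: 2 blkA_def )
  next
    case 3 show ?thesis by (rule adjI[of "m+7"]) (simp_all add: 3 blkA_def )
  next
    case 4 show ?thesis by (rule adjI[of "m+7"]) (simp_all add: 4 blkA_def )
  next
    case 5 show ?thesis by (rule adjI[of "0"]) (simp_all add: 5 blkA_def )
  next
    case 6 show ?thesis by (rule adjI[of "0"]) (simp_all add: 6 blkA_def )
  next
    case 7 show ?thesis by (rule adjI[of "1"]) (simp_all add: 7 blkA_def )
  next
    case 8 show ?thesis by (rule adjI[of "1"]) (simp_all add: 8 blkA_def )
  next
    case 9 show ?thesis by (rule adjI[of "0"]) (simp_all add: 9 blkA_def )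
  next
    case 10 show ?thesis by (rule adjI[of "0"]) (simp_all add: 10 blkA_def )
  next
    case 11 show ?thesis by (rule adjI[of "2"]) (simp_all add: 11 blkA_def )
  next
    case 12 show ?thesis by (rule adjI[of "2"]) (simp_all add: 12 blkA_def )
  qed
qed

definition blkB :: "nat \<Rightarrow> nat \<Rightarrow> nat set" where
 "blkB m i = (if i < m+3 then {i,i+1,i+3} else if i = m+3 then {m+3,m+6,m+7}
   else if i = m+4 then {m+4,m+5,m+6} else if i = m+5 then {m+4,m+7,1}
   else if i = m+6 then {m+5,m+7,0} else {m+6,0,2})"

lemma blkB_sub: "i < m+8 \<Longrightarrow> blkB m i \<subseteq> {..<m+8} \<and> card (blkB m i) = 3"
  by (auto simp: blkB_def)

definition fB :: "nat \<Rightarrow> nat \<Rightarrow> nat \<Rightarrow> nat" where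
 "fB m x y = (   if x = m+3 \<and> y = m+6 then m+3 else
   if x = m+3 \<and> y = m+7 then m+3 else
   if x = m+6 \<and> y = m+7 then m+3 else
   if x = m+4 \<and> y = m+5 then m+4 else
   if x = m+4 \<and> y = m+6 then m+4 else
   if x = m+5 \<and> y = m+6 then m+4 else
   if x = m+4 \<and> y = m+7 then m+5 else
   if x = 1 \<and> y = m+4 then m+5 else
   if x = 1 \<and> y = m+7 then m+5 else
   if x = m+5 \<and> y = m+7 then m+6 else
   if x = 0 \<and> y = m+5 then m+6 else
   if x = 0 \<and> y = m+7 then m+6 else
   if x = 0 \<and> y = m+6 then m+7 else
   if x = 2 \<and> y = m+6 then m+7 else
   if x = 0 \<and> y = 2 then m+7 else
   if y = x + 2 then x - 1 else x)"

lemma fB_s: "\<lbrakk>0 < m; y = i \<or> y = Suc i \<or> y = i + 3; x < y; i < m + 3;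
      x = i \<or> x = Suc i \<or> x = i + 3\<rbrakk> \<Longrightarrow> fB m x y = i"
  by (elim disjE; simp add: fB_def; linarith?)

lemma fB_g0: "\<lbrakk>x = m+3 \<or> x = m+6 \<or> x = m+7; y = m+3 \<or> y = m+6 \<or> y = m+7; x < y\<rbrakk> \<Longrightarrow> fB m x y = m+3"
  by (elim disjE; simp add: fB_def; linarith?)

lemma fB_g1: "\<lbrakk>x = m+4 \<or> x = m+5 \<or> x = m+6; y = m+4 \<or> y = m+5 \<or> y = m+6; x < y\<rbrakk> \<Longrightarrow> fB m x y = m+4"
  by (elim disjE; simp add: fB_def; linarith?)

lemma fB_g2: "\<lbrakk>x = m+4 \<or> x = m+7 \<or> x = 1; y = m+4 \<or> y = m+7 \<or> y = 1; x < y\<rbrakk> \<Longrightarrow> fB m x y = m+5"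
  by (elim disjE; simp add: fB_def; linarith?)

lemma fB_g3: "\<lbrakk>x = m+5 \<or> x = m+7 \<or> x = 0; y = m+5 \<or> y = m+7 \<or> y = 0; x < y\<rbrakk> \<Longrightarrow> fB m x y = m+6"
  by (elim disjE; simp add: fB_def; linarith?)

lemma fB_g4: "\<lbrakk>x = m+6 \<or> x = 0 \<or> x = 2; y = m+6 \<or> y = 0 \<or> y = 2; x < y\<rbrakk> \<Longrightarrow> fB m x y = m+7"
  by (elim disjE; simp add: fB_def; linarith?)

lemma fB_blk: "0 < m \<Longrightarrow> i < m+8 \<Longrightarrow> x \<in> blkB m i \<Longrightarrow> y \<in> blkB m i \<Longrightarrow> x < y \<Longrightarrow> fB m x y = i"
proof -
  assume a: "0 < m" "i < m+8" "x \<in> blkB m i" "y \<in> blkB m i" "x < y"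
  consider "i < m+3" | "i = m+3" | "i = m+4" | "i = m+5" | "i = m+6" | "i = m+7" using a by arith
  then show ?thesis
  proof cases
    case 1 show ?thesis by (rule fB_s) (use a 1 in \<open>simp_all add: blkB_def\<close>)

  next
    case 2 show ?thesis unfolding 2 by (rule fB_g0) (use a 2 in \<open>simp_all add: blkB_def\<close>)

  next
    case 3 show ?thesis unfolding 3 by (rule fB_g1) (use a 3 in \<open>simp_all add: blkB_def\<close>)

  next
    case 4 show ?thesis unfolding 4 by (rule fB_g2) (use a 4 in \<open>simp_all add: blkB_def\<close>)

  next
    case 5 show ?thesis unfolding 5 by (rule fB_g3) (use a 5 in \<open>simp_all add: blkB_def\<close>)

  next
    case 6 show ?thesis unfolding 6 by (rule fB_g4) (use a 6 in \<open>simp_all add: blkB_def\<close>)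

  qed
qed

lemma blkB_lin: "0 < m \<Longrightarrow> i < m+8 \<Longrightarrow> j < m+8 \<Longrightarrow> i \<noteq> j \<Longrightarrow> x \<in> blkB m i \<Longrightarrow> y \<in> blkB m i
              \<Longrightarrow> x \<in> blkB m j \<Longrightarrow> y \<in> blkB m j \<Longrightarrow> x = y"
proof (rule ccontr)
  assume pm: "0 < m" and a: "i < m+8" "j < m+8" "i \<noteq> j" "x \<in> blkB m i" "y \<in> blkB m i"
              "x \<in> blkB m j" "y \<in> blkB m j" "x \<noteq> y"
  show False
  proof (cases "x < y")
    case True
    thus False using fB_blk[where i=i and m=m and x=x and y=y] fB_blk[where i=j and m=m and x=x and y=y] a pm by simp
  next
    case False
    hence "y < x" using a(8) by simp
    thus False using fB_blk[where i=i and m=m and x=y and y=x] fB_blk[where i=j and m=m and x=y and y=x] a pm by simp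
  qed
qed

lemma blkB_deg: "p < m+8 \<Longrightarrow> \<exists>i j k. i < m+8 \<and> j < m+8 \<and> k < m+8 \<and> i \<noteq> j \<and> i \<noteq> k \<and> j \<noteq> k
                \<and> p \<in> blkB m i \<and> p \<in> blkB m j \<and> p \<in> blkB m k"
proof -
  assume p: "p < m+8"
  consider "p = 0" | "p = 1" | "p = 2" | "3 \<le> p" "p < m+3" | "p = m+3" | "p = m+4" | "p = m+5" | "p = m+6" | "p = m+7" using p by arith
  then show ?thesis
  proof cases

    case 1 show ?thesis by (rule ex3I[of "0" _ "m+6" "m+7"]) (use 1 in \<open>auto simp add: blkB_def\<close>)
  next
    case 2 show ?thesis by (rule ex3I[of "0" _ "1" "m+5"]) (use 2 in \<open>auto simp add: blkB_def\<close>)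
  next
    case 3 show ?thesis by (rule ex3I[of "1" _ "2" "m+7"]) (use 3 in \<open>auto simp add: blkB_def\<close>)
  next
    case 4 show ?thesis by (rule ex3I[of "p" _ "p-1" "p-3"]) (use 4 in \<open>auto simp add: blkB_def\<close>)
  next
    case 5 show ?thesis by (rule ex3I[of "m" _ "m+2" "m+3"]) (use 5 in \<open>auto simp add: blkB_def\<close>)
  next
    case 6 show ?thesis by (rule ex3I[of "m+1" _ "m+4" "m+5"]) (use 6 in \<open>auto simp add: blkB_def\<close>)
  next
    case 7 show ?thesis by (rule ex3I[of "m+2" _ "m+4" "m+6"]) (use 7 in \<open>auto simp add: blkB_def\<close>)
  next
    case 8 show ?thesis by (rule ex3I[of "m+3" _ "m+4" "m+7"]) (use 8 in \<open>auto simp add: blkB_def\<close>)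
  next
    case 9 show ?thesis by (rule ex3I[of "m+3" _ "m+5" "m+6"]) (use 9 in \<open>auto simp add: blkB_def\<close>)
  qed
qed


lemma blkB_conn: "p < m+8 \<Longrightarrow> 0 < p \<Longrightarrow> \<exists>i q. i < m+8 \<and> q < p \<and> p \<in> blkB m i \<and> q \<in> blkB m i"
proof -
  assume p: "p < m+8" "0 < p"
  consider "p \<le> m+3" | "p = m+4 \<or> p = m+5" | "p = m+6" | "p = m+7" using p by arith
  then show ?thesis
  proof cases
    case 1 show ?thesis by (rule ex2I[of "p-1" _ "p-1"]) (use 1 p in \<open>auto simp add: blkB_def\<close>)
  next
    case 2 show ?thesis by (rule ex2I[of "p-3" _ "p-3"]) (use 2 p in \<open>auto simp add: blkB_def\<close>)
  next
    case 3 show ?thesis by (rule ex2I[of "m+3" _ "m+3"]) (use 3 p in \<open>auto simp add: blkB_def\<close>)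
  next
    case 4 show ?thesis by (rule ex2I[of "m+3" _ "m+3"]) (use 4 p in \<open>auto simp add: blkB_def\<close>)
  qed
qed

lemma blkB_K: "0 < m \<Longrightarrow> x \<in> {0,1,2,3} \<Longrightarrow> y \<in> {0,1,2,3} \<Longrightarrow> x \<noteq> y \<Longrightarrow> \<exists>i<m+8. x \<in> blkB m i \<and> y \<in> blkB m i"
proof -
  assume pm: "0 < m" and a: "x \<in> {0,1,2,3}" "y \<in> {0,1,2,3}" "x \<noteq> y"
  consider "x = 0" "y = 1" | "x = 1" "y = 0" | "x = 0" "y = 2" | "x = 2" "y = 0" | "x = 0" "y = 3" | "x = 3" "y = 0" | "x = 1" "y = 2" | "x = 2" "y = 1" | "x = 1" "y = 3" | "x = 3" "y = 1" | "x = 2" "y = 3" | "x = 3" "y = 2" using a by auto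
  then show ?thesis
  proof cases
    case 1 show ?thesis by (rule adjI[of "0"]) (simp_all add: 1 blkB_def pm)
  next
    case 2 show ?thesis by (rule adjI[of "0"]) (simp_all add: 2 blkB_def pm)
  next
    case 3 show ?thesis by (rule adjI[of "m+7"]) (simp_all add: 3 blkB_def pm)
  next
    case 4 show ?thesis by (rule adjI[of "m+7"]) (simp_all add: 4 blkB_def pm)
  next
    case 5 show ?thesis by (rule adjI[of "0"]) (simp_all add: 5 blkB_def pm)
  next
    case 6 show ?thesis by (rule adjI[of "0"]) (simp_all add: 6 blkB_def pm)
  next
    case 7 show ?thesis by (rule adjI[of "1"]) (simp_all add: 7 blkB_def pm)
  next
    case 8 show ?thesis by (rule adjI[of "1"]) (simp_all add: 8 blkB_def pm)
  next
    case 9 show ?thesis by (rule adjI[of "0"]) (simp_all add: 9 blkB_def pm)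
  next
    case 10 show ?thesis by (rule adjI[of "0"]) (simp_all add: 10 blkB_def pm)
  next
    case 11 show ?thesis by (rule adjI[of "2"]) (simp_all add: 11 blkB_def pm)
  next
    case 12 show ?thesis by (rule adjI[of "2"]) (simp_all add: 12 blkB_def pm)
  qed
qed

definition blkC :: "nat \<Rightarrow> nat \<Rightarrow> nat set" where
 "blkC m i = (if i < m+3 then {i,i+1,i+3} else if i = m+3 then {m+3,m+6,0}
   else if i = m+4 then {m+4,m+5,m+6} else if i = m+5 then {m+4,m+7,0}
   else if i = m+6 then {m+5,m+7,1} else {m+6,m+7,2})"

lemma blkC_sub: "i < m+8 \<Longrightarrow> blkC m i \<subseteq> {..<m+8} \<and> card (blkC m i) = 3"
  by (auto simp: blkC_def)

definition fC :: "nat \<Rightarrow> nat \<Rightarrow> nat \<Rightarrow> nat" where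
 "fC m x y = (   if x = m+3 \<and> y = m+6 then m+3 else
   if x = 0 \<and> y = m+3 then m+3 else
   if x = 0 \<and> y = m+6 then m+3 else
   if x = m+4 \<and> y = m+5 then m+4 else
   if x = m+4 \<and> y = m+6 then m+4 else
   if x = m+5 \<and> y = m+6 then m+4 else
   if x = m+4 \<and> y = m+7 then m+5 else
   if x = 0 \<and> y = m+4 then m+5 else
   if x = 0 \<and> y = m+7 then m+5 else
   if x = m+5 \<and> y = m+7 then m+6 else
   if x = 1 \<and> y = m+5 then m+6 else
   if x = 1 \<and> y = m+7 then m+6 else
   if x = m+6 \<and> y = m+7 then m+7 else
   if x = 2 \<and> y = m+6 then m+7 else
   if x = 2 \<and> y = m+7 then m+7 else
   if y = x + 2 then x - 1 else x)"

lemma fC_s: "\<lbrakk>0 < m; y = i \<or> y = Suc i \<or> y = i + 3; x < y; i < m + 3;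
      x = i \<or> x = Suc i \<or> x = i + 3\<rbrakk> \<Longrightarrow> fC m x y = i"
  by (elim disjE; simp add: fC_def; linarith?)

lemma fC_g0: "\<lbrakk>x = m+3 \<or> x = m+6 \<or> x = 0; y = m+3 \<or> y = m+6 \<or> y = 0; x < y\<rbrakk> \<Longrightarrow> fC m x y = m+3"
  by (elim disjE; simp add: fC_def; linarith?)

lemma fC_g1: "\<lbrakk>x = m+4 \<or> x = m+5 \<or> x = m+6; y = m+4 \<or> y = m+5 \<or> y = m+6; x < y\<rbrakk> \<Longrightarrow> fC m x y = m+4"
  by (elim disjE; simp add: fC_def; linarith?)

lemma fC_g2: "\<lbrakk>x = m+4 \<or> x = m+7 \<or> x = 0; y = m+4 \<or> y = m+7 \<or> y = 0; x < y\<rbrakk> \<Longrightarrow> fC m x y = m+5"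
  by (elim disjE; simp add: fC_def; linarith?)

lemma fC_g3: "\<lbrakk>x = m+5 \<or> x = m+7 \<or> x = 1; y = m+5 \<or> y = m+7 \<or> y = 1; x < y\<rbrakk> \<Longrightarrow> fC m x y = m+6"
  by (elim disjE; simp add: fC_def; linarith?)

lemma fC_g4: "\<lbrakk>x = m+6 \<or> x = m+7 \<or> x = 2; y = m+6 \<or> y = m+7 \<or> y = 2; x < y\<rbrakk> \<Longrightarrow> fC m x y = m+7"
  by (elim disjE; simp add: fC_def; linarith?)

lemma fC_blk: "0 < m \<Longrightarrow> i < m+8 \<Longrightarrow> x \<in> blkC m i \<Longrightarrow> y \<in> blkC m i \<Longrightarrow> x < y \<Longrightarrow> fC m x y = i"
proof -
  assume a: "0 < m" "i < m+8" "x \<in> blkC m i" "y \<in> blkC m i" "x < y"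
  consider "i < m+3" | "i = m+3" | "i = m+4" | "i = m+5" | "i = m+6" | "i = m+7" using a by arith
  then show ?thesis
  proof cases
    case 1 show ?thesis by (rule fC_s) (use a 1 in \<open>simp_all add: blkC_def\<close>)

  next
    case 2 show ?thesis unfolding 2 by (rule fC_g0) (use a 2 in \<open>simp_all add: blkC_def\<close>)

  next
    case 3 show ?thesis unfolding 3 by (rule fC_g1) (use a 3 in \<open>simp_all add: blkC_def\<close>)

  next
    case 4 show ?thesis unfolding 4 by (rule fC_g2) (use a 4 in \<open>simp_all add: blkC_def\<close>)

  next
    case 5 show ?thesis unfolding 5 by (rule fC_g3) (use a 5 in \<open>simp_all add: blkC_def\<close>)

  next
    case 6 show ?thesis unfolding 6 by (rule fC_g4) (use a 6 in \<open>simp_all add: blkC_def\<close>)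

  qed
qed

lemma blkC_lin: "0 < m \<Longrightarrow> i < m+8 \<Longrightarrow> j < m+8 \<Longrightarrow> i \<noteq> j \<Longrightarrow> x \<in> blkC m i \<Longrightarrow> y \<in> blkC m i
              \<Longrightarrow> x \<in> blkC m j \<Longrightarrow> y \<in> blkC m j \<Longrightarrow> x = y"
proof (rule ccontr)
  assume pm: "0 < m" and a: "i < m+8" "j < m+8" "i \<noteq> j" "x \<in> blkC m i" "y \<in> blkC m i"
              "x \<in> blkC m j" "y \<in> blkC m j" "x \<noteq> y"
  show False
  proof (cases "x < y")
    case True
    thus False using fC_blk[where i=i and m=m and x=x and y=y] fC_blk[where i=j and m=m and x=x and y=y] a pm by simp
  next
    case False
    hence "y < x" using a(8) by simp
    thus False using fC_blk[where i=i and m=m and x=y and y=x] fC_blk[where i=j and m=m and x=y and y=x] a pm by simp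
  qed
qed

lemma blkC_deg: "p < m+8 \<Longrightarrow> \<exists>i j k. i < m+8 \<and> j < m+8 \<and> k < m+8 \<and> i \<noteq> j \<and> i \<noteq> k \<and> j \<noteq> k
                \<and> p \<in> blkC m i \<and> p \<in> blkC m j \<and> p \<in> blkC m k"
proof -
  assume p: "p < m+8"
  consider "p = 0" | "p = 1" | "p = 2" | "3 \<le> p" "p < m+3" | "p = m+3" | "p = m+4" | "p = m+5" | "p = m+6" | "p = m+7" using p by arith
  then show ?thesis
  proof cases

    case 1 show ?thesis by (rule ex3I[of "0" _ "m+3" "m+5"]) (use 1 in \<open>auto simp add: blkC_def\<close>)
  next
    case 2 show ?thesis by (rule ex3I[of "0" _ "1" "m+6"]) (use 2 in \<open>auto simp add: blkC_def\<close>)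
  next
    case 3 show ?thesis by (rule ex3I[of "1" _ "2" "m+7"]) (use 3 in \<open>auto simp add: blkC_def\<close>)
  next
    case 4 show ?thesis by (rule ex3I[of "p" _ "p-1" "p-3"]) (use 4 in \<open>auto simp add: blkC_def\<close>)
  next
    case 5 show ?thesis by (rule ex3I[of "m" _ "m+2" "m+3"]) (use 5 in \<open>auto simp add: blkC_def\<close>)
  next
    case 6 show ?thesis by (rule ex3I[of "m+1" _ "m+4" "m+5"]) (use 6 in \<open>auto simp add: blkC_def\<close>)
  next
    case 7 show ?thesis by (rule ex3I[of "m+2" _ "m+4" "m+6"]) (use 7 in \<open>auto simp add: blkC_def\<close>)
  next
    case 8 show ?thesis by (rule ex3I[of "m+3" _ "m+4" "m+7"]) (use 8 in \<open>auto simp add: blkC_def\<close>)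
  next
    case 9 show ?thesis by (rule ex3I[of "m+5" _ "m+6" "m+7"]) (use 9 in \<open>auto simp add: blkC_def\<close>)
  qed
qed


lemma blkC_conn: "p < m+8 \<Longrightarrow> 0 < p \<Longrightarrow> \<exists>i q. i < m+8 \<and> q < p \<and> p \<in> blkC m i \<and> q \<in> blkC m i"
proof -
  assume p: "p < m+8" "0 < p"
  consider "p \<le> m+3" | "p = m+4 \<or> p = m+5" | "p = m+6" | "p = m+7" using p by arith
  then show ?thesis
  proof cases
    case 1 show ?thesis by (rule ex2I[of "p-1" _ "p-1"]) (use 1 p in \<open>auto simp add: blkC_def\<close>)
  next
    case 2 show ?thesis by (rule ex2I[of "p-3" _ "p-3"]) (use 2 p in \<open>auto simp add: blkC_def\<close>)
  next
    case 3 show ?thesis by (rule ex2I[of "m+3" _ "0"]) (use 3 p in \<open>auto simp add: blkC_def\<close>)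
  next
    case 4 show ?thesis by (rule ex2I[of "m+5" _ "0"]) (use 4 p in \<open>auto simp add: blkC_def\<close>)
  qed
qed

lemma blkC_K: "0 < m \<Longrightarrow> x \<in> {1,2,3,4} \<Longrightarrow> y \<in> {1,2,3,4} \<Longrightarrow> x \<noteq> y \<Longrightarrow> \<exists>i<m+8. x \<in> blkC m i \<and> y \<in> blkC m i"
proof -
  assume pm: "0 < m" and a: "x \<in> {1,2,3,4}" "y \<in> {1,2,3,4}" "x \<noteq> y"
  consider "x = 1" "y = 2" | "x = 2" "y = 1" | "x = 1" "y = 3" | "x = 3" "y = 1" | "x = 1" "y = 4" | "x = 4" "y = 1" | "x = 2" "y = 3" | "x = 3" "y = 2" | "x = 2" "y = 4" | "x = 4" "y = 2" | "x = 3" "y = 4" | "x = 4" "y = 3" using a by auto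
  then show ?thesis
  proof cases
    case 1 show ?thesis by (rule adjI[of "1"]) (simp_all add: 1 blkC_def pm)
  next
    case 2 show ?thesis by (rule adjI[of "1"]) (simp_all add: 2 blkC_def pm)
  next
    case 3 show ?thesis by (rule adjI[of "0"]) (simp_all add: 3 blkC_def pm)
  next
    case 4 show ?thesis by (rule adjI[of "0"]) (simp_all add: 4 blkC_def pm)
  next
    case 5 show ?thesis by (rule adjI[of "1"]) (simp_all add: 5 blkC_def pm)
  next
    case 6 show ?thesis by (rule adjI[of "1"]) (simp_all add: 6 blkC_def pm)
  next
    case 7 show ?thesis by (rule adjI[of "2"]) (simp_all add: 7 blkC_def pm)
  next
    case 8 show ?thesis by (rule adjI[of "2"]) (simp_all add: 8 blkC_def pm)
  next
    case 9 show ?thesis by (rule adjI[of "1"]) (simp_all add: 9 blkC_def pm)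
  next
    case 10 show ?thesis by (rule adjI[of "1"]) (simp_all add: 10 blkC_def pm)
  next
    case 11 show ?thesis by (rule adjI[of "3"]) (simp_all add: 11 blkC_def pm)
  next
    case 12 show ?thesis by (rule adjI[of "3"]) (simp_all add: 12 blkC_def pm)
  qed
qed

definition colA0 :: "nat \<Rightarrow> nat \<Rightarrow> nat" where
 "colA0 m p = (if p = m+4 then 3 else if p = m+5 then 0 else if p = m+6 then 1 else if p = m+7 then 2 else p mod 4)"
definition colA3 :: "nat \<Rightarrow> nat \<Rightarrow> nat" where
 "colA3 m p = (if p = m+4 then 2 else if p = m+5 then 0 else if p = m+6 then 1 else if p = m+7 then 3 else p mod 4)"
definition colB :: "nat \<Rightarrow> nat \<Rightarrow> nat" where
 "colB m p = (if p = m+4 then 0 else if p = m+5 then 1 else if p = m+6 then 3 else if p = m+7 then 2 else p mod 4)"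
definition cperm :: "nat \<Rightarrow> nat" where
 "cperm k = (if k = 0 then 2 else if k = 1 then 1 else if k = 2 then 0 else 3)"
definition colC :: "nat \<Rightarrow> nat \<Rightarrow> nat" where
 "colC m p = (if p = 0 then 0 else if p = m+4 then 1 else if p = m+5 then 0 else if p = m+6 then 2 else if p = m+7 then 3 else cperm (p mod 4))"

lemma cperm_inj: "a < 4 \<Longrightarrow> b < 4 \<Longrightarrow> (cperm a = cperm b) = (a = b)"
  unfolding cperm_def by (cases a; cases b) (simp_all add: less_Suc_eq)

lemma cperm_lt: "cperm a < 4" unfolding cperm_def by simp

lemma colA0_inj: "i < 4*t+8 \<Longrightarrow> inj_on (colA0 (4*t)) (blkA (4*t) i)"
proof -
  assume i: "i < 4*t+8"
  consider "i \<le> 4*t" | "i = 4*t+1" | "i = 4*t+2" | "i = 4*t+3" | "i = 4*t+4" | "i = 4*t+5" | "i = 4*t+6" | "i = 4*t+7" using i by arith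
  then show ?thesis
  proof cases
    case 1
    hence "blkA (4*t) i = {i,i+1,i+3}" by (simp add: blkA_def)
    moreover have "colA0 (4*t) i = i mod 4" "colA0 (4*t) (i+1) = (i+1) mod 4"
      "colA0 (4*t) (i+3) = (i+3) mod 4" using 1 by (simp_all add: colA0_def)
    moreover have "i mod 4 \<noteq> (i+1) mod 4" "i mod 4 \<noteq> (i+3) mod 4" "(i+1) mod 4 \<noteq> (i+3) mod 4"
      by presburger+
    ultimately show ?thesis by simp
  qed (simp_all add: blkA_def colA0_def mod_Suc )
qed

lemma colA3_inj: "i < 4*t+3+8 \<Longrightarrow> inj_on (colA3 (4*t+3)) (blkA (4*t+3) i)"
proof -
  assume i: "i < 4*t+3+8"
  consider "i \<le> 4*t+3" | "i = 4*t+3+1" | "i = 4*t+3+2" | "i = 4*t+3+3" | "i = 4*t+3+4" | "i = 4*t+3+5" | "i = 4*t+3+6" | "i = 4*t+3+7" using i by arith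
  then show ?thesis
  proof cases
    case 1
    hence "blkA (4*t+3) i = {i,i+1,i+3}" by (simp add: blkA_def)
    moreover have "colA3 (4*t+3) i = i mod 4" "colA3 (4*t+3) (i+1) = (i+1) mod 4"
      "colA3 (4*t+3) (i+3) = (i+3) mod 4" using 1 by (simp_all add: colA3_def)
    moreover have "i mod 4 \<noteq> (i+1) mod 4" "i mod 4 \<noteq> (i+3) mod 4" "(i+1) mod 4 \<noteq> (i+3) mod 4"
      by presburger+
    ultimately show ?thesis by simp
  qed (simp_all add: blkA_def colA3_def mod_Suc )
qed

lemma colB_inj: "i < 4*t+1+8 \<Longrightarrow> inj_on (colB (4*t+1)) (blkB (4*t+1) i)"
proof -
  assume i: "i < 4*t+1+8"
  consider "i \<le> 4*t+1" | "i = 4*t+1+1" | "i = 4*t+1+2" | "i = 4*t+1+3" | "i = 4*t+1+4" | "i = 4*t+1+5" | "i = 4*t+1+6" | "i = 4*t+1+7" using i by arith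
  then show ?thesis
  proof cases
    case 1
    hence "blkB (4*t+1) i = {i,i+1,i+3}" by (simp add: blkB_def)
    moreover have "colB (4*t+1) i = i mod 4" "colB (4*t+1) (i+1) = (i+1) mod 4"
      "colB (4*t+1) (i+3) = (i+3) mod 4" using 1 by (simp_all add: colB_def)
    moreover have "i mod 4 \<noteq> (i+1) mod 4" "i mod 4 \<noteq> (i+3) mod 4" "(i+1) mod 4 \<noteq> (i+3) mod 4"
      by presburger+
    ultimately show ?thesis by simp
  qed (simp_all add: blkB_def colB_def mod_Suc )
qed

lemma colC_inj: "i < 4*t+2+8 \<Longrightarrow> inj_on (colC (4*t+2)) (blkC (4*t+2) i)"
proof -
  assume i: "i < 4*t+2+8"
  consider "i = 0" | "1 \<le> i" "i \<le> 4*t+2" | "i = 4*t+2+1" | "i = 4*t+2+2" | "i = 4*t+2+3" | "i = 4*t+2+4" | "i = 4*t+2+5" | "i = 4*t+2+6" | "i = 4*t+2+7" using i by arith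
  then show ?thesis
  proof cases
    case 2
    hence "blkC (4*t+2) i = {i,i+1,i+3}" by (simp add: blkC_def)
    moreover have "colC (4*t+2) i = cperm (i mod 4)" "colC (4*t+2) (i+1) = cperm ((i+1) mod 4)"
      "colC (4*t+2) (i+3) = cperm ((i+3) mod 4)" using 2 by (simp_all add: colC_def)
    moreover have "i mod 4 \<noteq> (i+1) mod 4" "i mod 4 \<noteq> (i+3) mod 4" "(i+1) mod 4 \<noteq> (i+3) mod 4"
      by presburger+
    ultimately show ?thesis by (simp add: cperm_inj)
  qed (simp_all add: blkC_def colC_def mod_Suc cperm_def)
qed

lemma instA0: "\<exists>(P :: nat set) (B :: nat set set).
           sym_config P B (4*t+8) \<and> config_connected P B \<and> strong_chromatic_number P B = 4"
proof -
  have s: "\<And>i. i < 4*t+8 \<Longrightarrow> blkA (4*t) i \<subseteq> {..<4*t+8} \<and> card (blkA (4*t) i) = 3"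
    by (rule blkA_sub)
  have l: "\<And>i j x y. i < 4*t+8 \<Longrightarrow> j < 4*t+8 \<Longrightarrow> i \<noteq> j \<Longrightarrow> x \<in> blkA (4*t) i \<Longrightarrow> y \<in> blkA (4*t) i
              \<Longrightarrow> x \<in> blkA (4*t) j \<Longrightarrow> y \<in> blkA (4*t) j \<Longrightarrow> x = y"
    by (rule blkA_lin)
  have d: "\<And>p. p < 4*t+8 \<Longrightarrow> \<exists>i j k. i < 4*t+8 \<and> j < 4*t+8 \<and> k < 4*t+8 \<and> i \<noteq> j \<and> i \<noteq> k \<and> j \<noteq> k
                \<and> p \<in> blkA (4*t) i \<and> p \<in> blkA (4*t) j \<and> p \<in> blkA (4*t) k"
    by (rule blkA_deg)
  have c: "\<And>p. p < 4*t+8 \<Longrightarrow> 0 < p \<Longrightarrow> \<exists>i q. i < 4*t+8 \<and> q < p \<and> p \<in> blkA (4*t) i \<and> q \<in> blkA (4*t) i"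
    by (rule blkA_conn)
  have cr: "\<And>p. p < 4*t+8 \<Longrightarrow> colA0 (4*t) p < 4" by (simp add: colA0_def cperm_lt)
  have ci: "\<And>i. i < 4*t+8 \<Longrightarrow> inj_on (colA0 (4*t)) (blkA (4*t) i)" by (rule colA0_inj)
  have ks: "{0,1,2,3} \<subseteq> {..<4*t+8::nat}" by auto
  have kc: "card {0,1,2,3::nat} = 4" by simp
  have ka: "\<And>x y. x \<in> {0,1,2,3} \<Longrightarrow> y \<in> {0,1,2,3} \<Longrightarrow> x \<noteq> y \<Longrightarrow> \<exists>i<4*t+8. x \<in> blkA (4*t) i \<and> y \<in> blkA (4*t) i"
    by (rule blkA_K)
  have "sym_config {..<4*t+8} (blkA (4*t) ` {..<4*t+8}) (4*t+8) \<and> config_connected {..<4*t+8} (blkA (4*t) ` {..<4*t+8})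
         \<and> strong_chromatic_number {..<4*t+8} (blkA (4*t) ` {..<4*t+8}) = 4"
    by (rule frame[OF _ s l d c cr ci ks kc ka]) simp
  thus ?thesis by blast
qed
lemma instA3: "\<exists>(P :: nat set) (B :: nat set set).
           sym_config P B (4*t+3+8) \<and> config_connected P B \<and> strong_chromatic_number P B = 4"
proof -
  have s: "\<And>i. i < 4*t+3+8 \<Longrightarrow> blkA (4*t+3) i \<subseteq> {..<4*t+3+8} \<and> card (blkA (4*t+3) i) = 3"
    by (rule blkA_sub)
  have l: "\<And>i j x y. i < 4*t+3+8 \<Longrightarrow> j < 4*t+3+8 \<Longrightarrow> i \<noteq> j \<Longrightarrow> x \<in> blkA (4*t+3) i \<Longrightarrow> y \<in> blkA (4*t+3) i
              \<Longrightarrow> x \<in> blkA (4*t+3) j \<Longrightarrow> y \<in> blkA (4*t+3) j \<Longrightarrow> x = y"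
    by (rule blkA_lin)
  have d: "\<And>p. p < 4*t+3+8 \<Longrightarrow> \<exists>i j k. i < 4*t+3+8 \<and> j < 4*t+3+8 \<and> k < 4*t+3+8 \<and> i \<noteq> j \<and> i \<noteq> k \<and> j \<noteq> k
                \<and> p \<in> blkA (4*t+3) i \<and> p \<in> blkA (4*t+3) j \<and> p \<in> blkA (4*t+3) k"
    by (rule blkA_deg)
  have c: "\<And>p. p < 4*t+3+8 \<Longrightarrow> 0 < p \<Longrightarrow> \<exists>i q. i < 4*t+3+8 \<and> q < p \<and> p \<in> blkA (4*t+3) i \<and> q \<in> blkA (4*t+3) i"
    by (rule blkA_conn)
  have cr: "\<And>p. p < 4*t+3+8 \<Longrightarrow> colA3 (4*t+3) p < 4" by (simp add: colA3_def cperm_lt)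
  have ci: "\<And>i. i < 4*t+3+8 \<Longrightarrow> inj_on (colA3 (4*t+3)) (blkA (4*t+3) i)" by (rule colA3_inj)
  have ks: "{0,1,2,3} \<subseteq> {..<4*t+3+8::nat}" by auto
  have kc: "card {0,1,2,3::nat} = 4" by simp
  have ka: "\<And>x y. x \<in> {0,1,2,3} \<Longrightarrow> y \<in> {0,1,2,3} \<Longrightarrow> x \<noteq> y \<Longrightarrow> \<exists>i<4*t+3+8. x \<in> blkA (4*t+3) i \<and> y \<in> blkA (4*t+3) i"
    by (rule blkA_K)
  have "sym_config {..<4*t+3+8} (blkA (4*t+3) ` {..<4*t+3+8}) (4*t+3+8) \<and> config_connected {..<4*t+3+8} (blkA (4*t+3) ` {..<4*t+3+8})
         \<and> strong_chromatic_number {..<4*t+3+8} (blkA (4*t+3) ` {..<4*t+3+8}) = 4"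
    by (rule frame[OF _ s l d c cr ci ks kc ka]) simp
  thus ?thesis by blast
qed
lemma instB: "\<exists>(P :: nat set) (B :: nat set set).
           sym_config P B (4*t+1+8) \<and> config_connected P B \<and> strong_chromatic_number P B = 4"
proof -
  have pos: "0 < (4*t+1)" by simp
  have s: "\<And>i. i < 4*t+1+8 \<Longrightarrow> blkB (4*t+1) i \<subseteq> {..<4*t+1+8} \<and> card (blkB (4*t+1) i) = 3"
    by (rule blkB_sub)
  have l: "\<And>i j x y. i < 4*t+1+8 \<Longrightarrow> j < 4*t+1+8 \<Longrightarrow> i \<noteq> j \<Longrightarrow> x \<in> blkB (4*t+1) i \<Longrightarrow> y \<in> blkB (4*t+1) i
              \<Longrightarrow> x \<in> blkB (4*t+1) j \<Longrightarrow> y \<in> blkB (4*t+1) j \<Longrightarrow> x = y"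
    by (rule blkB_lin[OF pos])
  have d: "\<And>p. p < 4*t+1+8 \<Longrightarrow> \<exists>i j k. i < 4*t+1+8 \<and> j < 4*t+1+8 \<and> k < 4*t+1+8 \<and> i \<noteq> j \<and> i \<noteq> k \<and> j \<noteq> k
                \<and> p \<in> blkB (4*t+1) i \<and> p \<in> blkB (4*t+1) j \<and> p \<in> blkB (4*t+1) k"
    by (rule blkB_deg)
  have c: "\<And>p. p < 4*t+1+8 \<Longrightarrow> 0 < p \<Longrightarrow> \<exists>i q. i < 4*t+1+8 \<and> q < p \<and> p \<in> blkB (4*t+1) i \<and> q \<in> blkB (4*t+1) i"
    by (rule blkB_conn)
  have cr: "\<And>p. p < 4*t+1+8 \<Longrightarrow> colB (4*t+1) p < 4" by (simp add: colB_def cperm_lt)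
  have ci: "\<And>i. i < 4*t+1+8 \<Longrightarrow> inj_on (colB (4*t+1)) (blkB (4*t+1) i)" by (rule colB_inj)
  have ks: "{0,1,2,3} \<subseteq> {..<4*t+1+8::nat}" by auto
  have kc: "card {0,1,2,3::nat} = 4" by simp
  have ka: "\<And>x y. x \<in> {0,1,2,3} \<Longrightarrow> y \<in> {0,1,2,3} \<Longrightarrow> x \<noteq> y \<Longrightarrow> \<exists>i<4*t+1+8. x \<in> blkB (4*t+1) i \<and> y \<in> blkB (4*t+1) i"
    by (rule blkB_K[OF pos])
  have "sym_config {..<4*t+1+8} (blkB (4*t+1) ` {..<4*t+1+8}) (4*t+1+8) \<and> config_connected {..<4*t+1+8} (blkB (4*t+1) ` {..<4*t+1+8})
         \<and> strong_chromatic_number {..<4*t+1+8} (blkB (4*t+1) ` {..<4*t+1+8}) = 4"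
    by (rule frame[OF _ s l d c cr ci ks kc ka]) simp
  thus ?thesis by blast
qed
lemma instC: "\<exists>(P :: nat set) (B :: nat set set).
           sym_config P B (4*t+2+8) \<and> config_connected P B \<and> strong_chromatic_number P B = 4"
proof -
  have pos: "0 < (4*t+2)" by simp
  have s: "\<And>i. i < 4*t+2+8 \<Longrightarrow> blkC (4*t+2) i \<subseteq> {..<4*t+2+8} \<and> card (blkC (4*t+2) i) = 3"
    by (rule blkC_sub)
  have l: "\<And>i j x y. i < 4*t+2+8 \<Longrightarrow> j < 4*t+2+8 \<Longrightarrow> i \<noteq> j \<Longrightarrow> x \<in> blkC (4*t+2) i \<Longrightarrow> y \<in> blkC (4*t+2) i
              \<Longrightarrow> x \<in> blkC (4*t+2) j \<Longrightarrow> y \<in> blkC (4*t+2) j \<Longrightarrow> x = y"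
    by (rule blkC_lin[OF pos])
  have d: "\<And>p. p < 4*t+2+8 \<Longrightarrow> \<exists>i j k. i < 4*t+2+8 \<and> j < 4*t+2+8 \<and> k < 4*t+2+8 \<and> i \<noteq> j \<and> i \<noteq> k \<and> j \<noteq> k
                \<and> p \<in> blkC (4*t+2) i \<and> p \<in> blkC (4*t+2) j \<and> p \<in> blkC (4*t+2) k"
    by (rule blkC_deg)
  have c: "\<And>p. p < 4*t+2+8 \<Longrightarrow> 0 < p \<Longrightarrow> \<exists>i q. i < 4*t+2+8 \<and> q < p \<and> p \<in> blkC (4*t+2) i \<and> q \<in> blkC (4*t+2) i"
    by (rule blkC_conn)
  have cr: "\<And>p. p < 4*t+2+8 \<Longrightarrow> colC (4*t+2) p < 4" by (simp add: colC_def cperm_lt)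
  have ci: "\<And>i. i < 4*t+2+8 \<Longrightarrow> inj_on (colC (4*t+2)) (blkC (4*t+2) i)" by (rule colC_inj)
  have ks: "{1,2,3,4} \<subseteq> {..<4*t+2+8::nat}" by auto
  have kc: "card {1,2,3,4::nat} = 4" by simp
  have ka: "\<And>x y. x \<in> {1,2,3,4} \<Longrightarrow> y \<in> {1,2,3,4} \<Longrightarrow> x \<noteq> y \<Longrightarrow> \<exists>i<4*t+2+8. x \<in> blkC (4*t+2) i \<and> y \<in> blkC (4*t+2) i"
    by (rule blkC_K[OF pos])
  have "sym_config {..<4*t+2+8} (blkC (4*t+2) ` {..<4*t+2+8}) (4*t+2+8) \<and> config_connected {..<4*t+2+8} (blkC (4*t+2) ` {..<4*t+2+8})
         \<and> strong_chromatic_number {..<4*t+2+8} (blkC (4*t+2) ` {..<4*t+2+8}) = 4"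
    by (rule frame[OF _ s l d c cr ci ks kc ka]) simp
  thus ?thesis by blast
qed

theorem mainTheorem14:
  fixes v :: nat
  assumes "v \<ge> 8"
  shows "\<exists>(P :: nat set) (B :: nat set set).
           sym_config P B v \<and> config_connected P B \<and> strong_chromatic_number P B = 4"
proof -
  define t where "t = (v - 8) div 4"
  have "v = 4*t+8 \<or> v = 4*t+1+8 \<or> v = 4*t+2+8 \<or> v = 4*t+3+8"
    unfolding t_def using assms by presburger
  thus ?thesis using instA0[of t] instA3[of t] instB[of t] instC[of t] by blast
qed

end
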